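(* Let $B_1$ and $B_2$ be rook equivalent Ferrers boards, both written with $n$ columns, such that $\{B_1,B_2\}$ is an edge of the rook equivalence graph. Then the root vectors $\xi(B_1)$ and $\xi(B_2)$ differ only in two positions, whose entries are swapped. That is, if $\xi(B_1)=\langle z_1,\ldots,z_{i_1},\ldots,z_{i_2},\ldots,z_n\rangle$ then $\xi(B_2)=\langle z_1,\ldots,z_{i_2},\ldots,z_{i_1},\ldots,z_n\rangle$ for some $1\le i_1<i_2\le n$ with $z_{i_1}\neq z_{i_2}$.
   Context: A Ferrers board is given by a weakly increasing sequence of non-negative integers $B=(b_1,\ldots,b_n)$ of column heights; it is the set of unit cells in the first quadrant lying in column $i$ and rows $1,\ldots,b_i$. Prepending columns of height $0$ on the left does not change the board, and boards are compared using the same number of columns by such padding. A placement of $k$ rooks on $B$ is a set of $k$ cells of $B$ no two in the same row or column; $r_k(B)$ is the number of such placements. Two boards are rook equivalent ($B_1\equiv B_2$) if $r_k(B_1)=r_k(B_2)$ for all $k\ge 0$. The root vector of $B=(b_1,\ldots,b_n)$ is $\xi(B)=\langle 0-b_1,1-b_2,\ldots,(n-1)-b_n\rangle$. The rook equivalence graph of the class of $B$ has as vertices all Ferrers boards rook equivalent to $B$, and $\{B_1,B_2\}$ is an edge iff, written with the same number of columns, $B_1$ and $B_2$ differ in exactly two columns $i$ and $j$, where $B_1$ has $k$ more cells than $B_2$ in column $i$ and $k$ fewer cells than $B_2$ in column $j$, for some $k>0$ (i.e. one is obtained from the other by moving $k$ cells from the top of one column to the top of another). *)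

theory Defs
  imports Main
begin

(* A Ferrers board with n columns: a list of column heights of length n,
   weakly increasing. Columns are 0-indexed here (column i of the paper is index i-1). *)
definition ferrers :: "nat list \<Rightarrow> bool" where
  "ferrers B \<longleftrightarrow> sorted B"

definition cells :: "nat list \<Rightarrow> (nat \<times> nat) set" where
  "cells B = {(i, j). i < length B \<and> 1 \<le> j \<and> j \<le> B ! i}"

definition rook_placement :: "nat list \<Rightarrow> nat \<Rightarrow> (nat \<times> nat) set \<Rightarrow> bool" where
  "rook_placement B k P \<longleftrightarrow> P \<subseteq> cells B \<and> card P = k \<and>
     (\<forall>c\<in>P. \<forall>d\<in>P. c \<noteq> d \<longrightarrow> fst c \<noteq> fst d \<and> snd c \<noteq> snd d)"

definition rook_number :: "nat list \<Rightarrow> nat \<Rightarrow> nat" where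
  "rook_number B k = card {P. rook_placement B k P}"

definition rook_equiv :: "nat list \<Rightarrow> nat list \<Rightarrow> bool" where
  "rook_equiv B1 B2 \<longleftrightarrow> (\<forall>k. rook_number B1 k = rook_number B2 k)"

definition root_vector :: "nat list \<Rightarrow> int list" where
  "root_vector B = map (\<lambda>i. int i - int (B ! i)) [0..<length B]"

definition rook_edge :: "nat list \<Rightarrow> nat list \<Rightarrow> bool" where
  "rook_edge B1 B2 \<longleftrightarrow> length B1 = length B2 \<and>
     (\<exists>i j k. i < length B1 \<and> j < length B1 \<and> i \<noteq> j \<and> k > 0 \<and>
        B1 ! i = B2 ! i + k \<and> B1 ! j + k = B2 ! j \<and>
        (\<forall>l<length B1. l \<noteq> i \<longrightarrow> l \<noteq> j \<longrightarrow> B1 ! l = B2 ! l))"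

end

theory Submission imports Defs begin
lemma card_D:
  assumes "a \<le> (b::nat)"
  shows "card {(r,s). r \<in> {1..a} \<and> s \<in> {1..b} \<and> r \<noteq> s} = a*b - a"
proof -
  have e: "{(r,s). r \<in> {1..a} \<and> s \<in> {1..b} \<and> r \<noteq> s} = {1..a}\<times>{1..b} - (\<lambda>r. (r,r)) ` {1..a}"
    by auto
  have s: "(\<lambda>r. (r,r)) ` {1..a} \<subseteq> {1..a}\<times>{1..b}" using assms by auto
  have c: "card ((\<lambda>r. (r,r)) ` {1..a}) = a"
    by (subst card_image) (auto simp: inj_on_def)
  have "card ({1..a}\<times>{1..b} - (\<lambda>r. (r,r)) ` {1..a}) = card ({1..a}\<times>{1..b}) - card ((\<lambda>r. (r,r)) ` {1..a})"
    by (rule card_Diff_subset) (use s in \<open>auto intro: finite_subset\<close>)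
  then show ?thesis unfolding e c by (simp add: card_cartesian_product)
qed

lemma finite_D: "finite {(r,s). r \<in> {1..a::nat} \<and> s \<in> {1..b::nat} \<and> r \<noteq> s}"
  by (rule finite_subset[of _ "{1..a}\<times>{1..b}"]) auto

definition T2 :: "nat list \<Rightarrow> ((nat\<times>nat)\<times>(nat\<times>nat)) set" where
  "T2 B = {(c,d). c \<in> cells B \<and> d \<in> cells B \<and> fst c < fst d \<and> snd c \<noteq> snd d}"

lemma placements_eq: "{P. rook_placement B 2 P} = (\<lambda>(c,d). {c,d}) ` T2 B"
proof (rule set_eqI, rule iffI)
  fix P assume "P \<in> {P. rook_placement B 2 P}"
  hence P: "P \<subseteq> cells B" "card P = 2"
    "\<forall>c\<in>P. \<forall>d\<in>P. c \<noteq> d \<longrightarrow> fst c \<noteq> fst d \<and> snd c \<noteq> snd d"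
    by (auto simp: rook_placement_def)
  then obtain c d where cd: "P = {c,d}" "c \<noteq> d" by (auto simp: card_2_iff)
  show "P \<in> (\<lambda>(c,d). {c,d}) ` T2 B"
  proof (cases "fst c < fst d")
    case True
    have "(c,d) \<in> T2 B" using P cd True by (auto simp: T2_def)
    then show ?thesis using cd by (auto intro!: rev_image_eqI[of "(c,d)"])
  next
    case False
    hence "fst d < fst c" using P cd by auto
    hence "(d,c) \<in> T2 B" using P cd by (auto simp: T2_def)
    then show ?thesis using cd by (auto intro!: rev_image_eqI[of "(d,c)"])
  qed
next
  fix P assume "P \<in> (\<lambda>(c,d). {c,d}) ` T2 B"
  then obtain c d where "P = {c,d}" "(c,d) \<in> T2 B" by auto
  moreover have "c \<noteq> d" using \<open>(c,d) \<in> T2 B\<close> by (auto simp: T2_def)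
  hence "card {c,d} = 2" by simp
  ultimately show "P \<in> {P. rook_placement B 2 P}"
    by (auto simp: T2_def rook_placement_def)
qed

lemma inj_T2: "inj_on (\<lambda>(c,d). {c,d}) (T2 B)"
  unfolding inj_on_def T2_def
  by (auto simp: doubleton_eq_iff)

lemma T2_eq: "T2 B = (\<lambda>(q,p,r,s). ((p,r),(q,s))) `
   (SIGMA q:{..<length B}. SIGMA p:{..<q}. {(r,s). r \<in> {1..B!p} \<and> s \<in> {1..B!q} \<and> r \<noteq> s})"
  unfolding T2_def cells_def by (auto simp: image_iff)

lemma r2_formula:
  assumes "sorted B"
  shows "rook_number B 2 = (\<Sum>q<length B. \<Sum>p<q. B!p * B!q - B!p)"
proof -
  have "rook_number B 2 = card (T2 B)"
    unfolding rook_number_def placements_eq by (rule card_image[OF inj_T2])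
  also have "\<dots> = card (SIGMA q:{..<length B}. SIGMA p:{..<q}. {(r,s). r \<in> {1..B!p} \<and> s \<in> {1..B!q} \<and> r \<noteq> s})"
    unfolding T2_eq by (rule card_image) (auto simp: inj_on_def)
  also have "\<dots> = (\<Sum>q<length B. \<Sum>p<q. card {(r,s). r \<in> {1..B!p} \<and> s \<in> {1..B!q} \<and> r \<noteq> s})"
  proof -
    define D where "D = (\<lambda>p q. {(r,s). r \<in> {1..B!p} \<and> s \<in> {1..B!q} \<and> r \<noteq> s})"
    have fD: "finite (D p q)" for p q unfolding D_def by (rule finite_D)
    have "card (SIGMA q:{..<length B}. SIGMA p:{..<q}. D p q) = (\<Sum>q<length B. card (SIGMA p:{..<q}. D p q))"
      by (rule card_SigmaI) (auto intro!: finite_SigmaI fD)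
    also have "\<dots> = (\<Sum>q<length B. \<Sum>p<q. card (D p q))"
      by (intro sum.cong refl card_SigmaI) (auto intro!: fD)
    finally show ?thesis unfolding D_def .
  qed
  also have "\<dots> = (\<Sum>q<length B. \<Sum>p<q. B!p * B!q - B!p)"
    using assms by (intro sum.cong refl card_D) (auto simp: sorted_iff_nth_mono)
  finally show ?thesis .
qed

lemma sum_ident:
  fixes f :: "nat \<Rightarrow> int"
  shows "2*(\<Sum>q<n. \<Sum>p<q. f p * (f q - 1)) = (\<Sum>p<n. f p)^2 - (\<Sum>p<n. (f p)^2) - 2*(\<Sum>p<n. f p * (int n - 1 - int p))"
proof (induction n)
  case 0 then show ?case by simp
next
  case (Suc n)
  have a: "(\<Sum>p<n. f p * (int (Suc n) - 1 - int p)) = (\<Sum>p<n. f p * (int n - 1 - int p)) + (\<Sum>p<n. f p)"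
    by (simp add: sum.distrib[symmetric] algebra_simps)
  have b: "(\<Sum>p<n. f p * (f n - 1)) = (\<Sum>p<n. f p) * f n - (\<Sum>p<n. f p)"
    by (simp add: sum_distrib_right[symmetric] algebra_simps sum_subtractf)
  show ?case using Suc.IH a b by (simp add: power2_eq_square algebra_simps)
qed

lemma sum_two_change:
  fixes g :: "nat \<Rightarrow> int \<Rightarrow> int"
  assumes "i \<noteq> j" "i < n" "j < n" "\<forall>l<n. l \<noteq> i \<longrightarrow> l \<noteq> j \<longrightarrow> f1 l = f2 l"
  shows "(\<Sum>l<n. g l (f1 l)) - g i (f1 i) - g j (f1 j) = (\<Sum>l<n. g l (f2 l)) - g i (f2 i) - g j (f2 j)"
proof -
  have s: "{i,j} \<subseteq> {..<n}" using assms by auto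
  have "(\<Sum>l<n. g l (f h l)) = (\<Sum>l\<in>{..<n}-{i,j}. g l (f h l)) + g i (f h i) + g j (f h j)" for f h
    using sum.subset_diff[OF s, of "\<lambda>l. g l (f h l)"] assms(1) by simp
  from this[of "\<lambda>_. f1" 0] this[of "\<lambda>_. f2" 0]
  have e: "(\<Sum>l<n. g l (f1 l)) - g i (f1 i) - g j (f1 j) = (\<Sum>l\<in>{..<n}-{i,j}. g l (f1 l))"
          "(\<Sum>l<n. g l (f2 l)) - g i (f2 i) - g j (f2 j) = (\<Sum>l\<in>{..<n}-{i,j}. g l (f2 l))" by simp_all
  have "(\<Sum>l\<in>{..<n}-{i,j}. g l (f1 l)) = (\<Sum>l\<in>{..<n}-{i,j}. g l (f2 l))"
    using assms(4) by (intro sum.cong) auto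
  then show ?thesis using e by simp
qed

lemma r2_int:
  assumes "sorted B"
  shows "2 * int (rook_number B 2) = (\<Sum>p<length B. int (B!p))^2 - (\<Sum>p<length B. (int (B!p))^2)
          - 2*(\<Sum>p<length B. int (B!p) * (int (length B) - 1 - int p))"
proof -
  have "int (rook_number B 2) = (\<Sum>q<length B. \<Sum>p<q. int (B!p) * (int (B!q) - 1))"
    unfolding r2_formula[OF assms] of_nat_sum
  proof (intro sum.cong refl)
    fix q p assume "q \<in> {..<length B}" "p \<in> {..<q}"
    hence le: "B!p \<le> B!q" using assms by (auto simp: sorted_iff_nth_mono)
    show "int (B!p * B!q - B!p) = int (B!p) * (int (B!q) - 1)"
    proof (cases "B!q = 0")
      case True then show ?thesis using le by simp
    next
      case False
      hence "B!p \<le> B!p * B!q" by simp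
      then show ?thesis by (simp add: of_nat_diff algebra_simps)
    qed
  qed
  then show ?thesis using sum_ident[of "\<lambda>p. int (B!p)" "length B"] by simp
qed

theorem theorem6:
  fixes B1 B2 :: "nat list" and n :: nat
  assumes "ferrers B1" and "ferrers B2"
    and "length B1 = n" and "length B2 = n"
    and "rook_equiv B1 B2"
    and "rook_edge B1 B2"
  shows "\<exists>i1 i2. i1 < i2 \<and> i2 < n \<and>
           root_vector B1 ! i1 \<noteq> root_vector B1 ! i2 \<and>
           root_vector B2 = (root_vector B1)[i1 := root_vector B1 ! i2, i2 := root_vector B1 ! i1]"
proof -
  obtain i j k where ijk: "i < n" "j < n" "i \<noteq> j" "k > 0"
    "B1 ! i = B2 ! i + k" "B1 ! j + k = B2 ! j"
    "\<forall>l<n. l \<noteq> i \<longrightarrow> l \<noteq> j \<longrightarrow> B1 ! l = B2 ! l"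
    using assms(6) assms(3) unfolding rook_edge_def by blast
  define f1 where "f1 = (\<lambda>p. int (B1!p))"
  define f2 where "f2 = (\<lambda>p. int (B2!p))"
  have fe: "\<forall>l<n. l \<noteq> i \<longrightarrow> l \<noteq> j \<longrightarrow> f1 l = f2 l" using ijk(7) by (simp add: f1_def f2_def)
  have R: "2 * int (rook_number B1 2) = 2 * int (rook_number B2 2)"
    using assms(5) unfolding rook_equiv_def by simp
  have E: "(\<Sum>p<n. f1 p)^2 - (\<Sum>p<n. (f1 p)^2) - 2*(\<Sum>p<n. f1 p * (int n - 1 - int p))
       = (\<Sum>p<n. f2 p)^2 - (\<Sum>p<n. (f2 p)^2) - 2*(\<Sum>p<n. f2 p * (int n - 1 - int p))"
    using R r2_int[of B1] r2_int[of B2] assms(1-4) by (simp add: ferrers_def f1_def f2_def)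
  have S: "(\<Sum>p<n. f1 p) = (\<Sum>p<n. f2 p)"
    using sum_two_change[OF ijk(3,1,2) fe, of "\<lambda>l x. x"] ijk(5,6) by (simp add: f1_def f2_def)
  have Q: "(\<Sum>p<n. (f1 p)^2) - (f1 i)^2 - (f1 j)^2 = (\<Sum>p<n. (f2 p)^2) - (f2 i)^2 - (f2 j)^2"
    using sum_two_change[OF ijk(3,1,2) fe, of "\<lambda>l x. x^2"] by simp
  have W: "(\<Sum>p<n. f1 p * (int n - 1 - int p)) - f1 i * (int n - 1 - int i) - f1 j * (int n - 1 - int j)
     = (\<Sum>p<n. f2 p * (int n - 1 - int p)) - f2 i * (int n - 1 - int i) - f2 j * (int n - 1 - int j)"
    using sum_two_change[OF ijk(3,1,2) fe, of "\<lambda>l x. x * (int n - 1 - int l)"] by simp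
  define a where "a = f2 i"
  define c where "c = f1 j"
  have f1i: "f1 i = a + int k" and f2j: "f2 j = c + int k"
    using ijk(5,6) by (auto simp: a_def c_def f1_def f2_def)
  have "(f1 i)^2 + (f1 j)^2 + 2*(f1 i * (int n - 1 - int i) + f1 j * (int n - 1 - int j))
      = (f2 i)^2 + (f2 j)^2 + 2*(f2 i * (int n - 1 - int i) + f2 j * (int n - 1 - int j))"
    using E S Q W by (simp add: algebra_simps)
  hence "int k * (2 * (a - c + int j - int i)) = 0"
    unfolding f1i f2j a_def[symmetric] c_def[symmetric] by (simp add: power2_eq_square algebra_simps)
  hence key: "a - int i = c - int j" using ijk(4) by simp
  have lr: "length (root_vector B) = length B" for B by (simp add: root_vector_def)
  have rv: "p < length B \<Longrightarrow> root_vector B ! p = int p - int (B!p)" for B p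
    by (simp add: root_vector_def)
  let ?z = "root_vector B1"
  have z1i: "?z ! i = int i - f1 i" and z1j: "?z ! j = int j - f1 j"
    and z2i: "root_vector B2 ! i = int i - f2 i" and z2j: "root_vector B2 ! j = int j - f2 j"
    using ijk(1,2) assms(3,4) rv by (auto simp: f1_def f2_def)
  have zl: "\<And>l. l < n \<Longrightarrow> l \<noteq> i \<Longrightarrow> l \<noteq> j \<Longrightarrow> root_vector B2 ! l = ?z ! l"
    using fe assms(3,4) rv by (auto simp: f1_def f2_def)
  have neq: "?z ! i \<noteq> ?z ! j" using z1i z1j f1i key ijk(4) by (simp add: c_def)
  have swap: "root_vector B2 = ?z[i := ?z ! j, j := ?z ! i]"
  proof (rule nth_equalityI)
    show "length (root_vector B2) = length (?z[i := ?z ! j, j := ?z ! i])" using lr assms(3,4) by simp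
  next
    fix l assume "l < length (root_vector B2)"
    hence l: "l < n" using lr assms(4) by simp
    show "root_vector B2 ! l = ?z[i := ?z ! j, j := ?z ! i] ! l"
      using l zl z1i z1j z2i z2j f1i f2j key ijk(1,2,3) lr assms(3) a_def c_def
      by (auto simp: nth_list_update)
  qed
  show ?thesis
  proof (cases "i < j")
    case True then show ?thesis using swap neq ijk(2) by blast
  next
    case False
    hence "j < i" using ijk(3) by simp
    moreover have "?z[i := ?z ! j, j := ?z ! i] = ?z[j := ?z ! i, i := ?z ! j]"
      using ijk(3) by (rule list_update_swap)
    ultimately show ?thesis using swap neq ijk(1) by metis
  qed
qed

end
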